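(* Let $n,m$ be positive integers and let $\mathbb P$ be one of the distributions $x_m,x^*_m,x^+_m$ on $S_n$. Then $\mathrm{sep}(\mathbb P)=\max\{1-n!\,\mathbb P(0),\,1-n!\,\mathbb P(k_{\max})\}$ and $\|\mathbb P-U\|_\infty=\max\{|1-n!\,\mathbb P(0)|,\,|1-n!\,\mathbb P(k_{\max})|\}$, where $k_{\max}=\lfloor n/2\rfloor$, $\lfloor (n-1)/2\rfloor$, $n-1$ for $x_m$, $x^*_m$, $x^+_m$ respectively.
   Context: For $\pi\in S_n$: $\mathrm{des}(\pi)=|\{i:\pi(i)>\pi(i+1)\}|$; $\mathrm{pk}(\pi)=|\{2\le i\le n-1:\pi(i-1)<\pi(i)>\pi(i+1)\}|$; $\mathrm{lpk}(\pi)$ is the number of peaks with the convention $\pi(0)=0$. Integers are written with $\bar i=-i$, ordered $0<_{\mathbb Z}\bar1<_{\mathbb Z}1<_{\mathbb Z}\bar2<2<\cdots$, $|\bar j|=j$; $a\prec_+b$ means $a<_{\mathbb Z}b$ or $a=b\in\{0,1,\ldots\}$; $a\prec_-b$ means $a<_{\mathbb Z}b$ or $a=b\in\{\bar1,\bar2,\ldots\}$. A $\pi$-partition is $f:[n]\to\mathbb Z$ with, for $1\le i<n$, $f(\pi(i))\prec_+f(\pi(i+1))$ if $\pi(i)<\pi(i+1)$, $f(\pi(i))\prec_-f(\pi(i+1))$ if $\pi(i)>\pi(i+1)$. $\Omega_\pi(m)$ counts $\pi$-partitions with $|f(i)|\le m$; $\Omega^*_\pi(m)$ those also never $0$; $\Omega^+_\pi(m)$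 those with values in $\{1,\ldots,m\}$. The distributions are $x_m(\pi)=\Omega_\pi(m)/(2m+1)^n$, $x^*_m(\pi)=\Omega^*_\pi(m)/(2m)^n$, $x^+_m(\pi)=\Omega^+_\pi(m)/m^n$ (the lazy, standard and strict $m$-shelf shuffling distributions). It is known that $x_m(\pi)$ depends only on $\mathrm{lpk}(\pi)$, $x^*_m(\pi)$ only on $\mathrm{pk}(\pi)$, $x^+_m(\pi)$ only on $\mathrm{des}(\pi)$; for $\mathbb P=x_m$ (resp. $x^*_m$, $x^+_m$), $\mathbb P(k)$ denotes the common value on permutations with $\mathrm{lpk}=k$ (resp. $\mathrm{pk}=k$, $\mathrm{des}=k$). $U$ is the uniform distribution on $S_n$; $\mathrm{sep}(\mathbb P)=\max_{\pi}(1-n!\mathbb P(\pi))$ and $\|\mathbb P-U\|_\infty=\max_\pi|1-n!\mathbb P(\pi)|$. *)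

theory Defs
  imports Complex_Main "HOL-Library.FuncSet" "HOL-Combinatorics.Permutations"
begin

text \<open>Permutations of [n] = {1..n} are functions nat => nat that permute {1..n}.\<close>

definition des :: "nat \<Rightarrow> (nat \<Rightarrow> nat) \<Rightarrow> nat" where
  "des n p = card {i \<in> {1..<n}. p i > p (Suc i)}"

definition pk :: "nat \<Rightarrow> (nat \<Rightarrow> nat) \<Rightarrow> nat" where
  "pk n p = card {i \<in> {2..n-1}. p (i-1) < p i \<and> p i > p (Suc i)}"

definition lpk :: "nat \<Rightarrow> (nat \<Rightarrow> nat) \<Rightarrow> nat" where
  "lpk n p = card {i \<in> {1..n-1}. (if i = 1 then 0 else p (i-1)) < p i \<and> p i > p (Suc i)}"

text \<open>The order 0 < -1 < 1 < -2 < 2 < ... on the integers, via a rank key.\<close>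
definition zkey :: "int \<Rightarrow> int" where
  "zkey a = (if a \<ge> 0 then 2 * a else 2 * (- a) - 1)"

definition zless :: "int \<Rightarrow> int \<Rightarrow> bool" where
  "zless a b \<longleftrightarrow> zkey a < zkey b"

definition prec_plus :: "int \<Rightarrow> int \<Rightarrow> bool" where
  "prec_plus a b \<longleftrightarrow> zless a b \<or> (a = b \<and> a \<ge> 0)"

definition prec_minus :: "int \<Rightarrow> int \<Rightarrow> bool" where
  "prec_minus a b \<longleftrightarrow> zless a b \<or> (a = b \<and> a < 0)"

definition is_ppart :: "nat \<Rightarrow> (nat \<Rightarrow> nat) \<Rightarrow> (nat \<Rightarrow> int) \<Rightarrow> bool" where
  "is_ppart n p f \<longleftrightarrow> (\<forall>i. 1 \<le> i \<and> i < n \<longrightarrow>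
     (p i < p (Suc i) \<longrightarrow> prec_plus (f (p i)) (f (p (Suc i)))) \<and>
     (p i > p (Suc i) \<longrightarrow> prec_minus (f (p i)) (f (p (Suc i)))))"

definition Omega :: "nat \<Rightarrow> nat \<Rightarrow> (nat \<Rightarrow> nat) \<Rightarrow> nat" where
  "Omega n m p = card {f \<in> {1..n} \<rightarrow>\<^sub>E {- int m..int m}. is_ppart n p f}"

definition Omega_star :: "nat \<Rightarrow> nat \<Rightarrow> (nat \<Rightarrow> nat) \<Rightarrow> nat" where
  "Omega_star n m p = card {f \<in> {1..n} \<rightarrow>\<^sub>E ({- int m..int m} - {0}). is_ppart n p f}"

definition Omega_plus :: "nat \<Rightarrow> nat \<Rightarrow> (nat \<Rightarrow> nat) \<Rightarrow> nat" where
  "Omega_plus n m p = card {f \<in> {1..n} \<rightarrow>\<^sub>E {1..int m}. is_ppart n p f}"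

definition x_lazy :: "nat \<Rightarrow> nat \<Rightarrow> (nat \<Rightarrow> nat) \<Rightarrow> real" where
  "x_lazy n m p = real (Omega n m p) / (2 * real m + 1) ^ n"

definition x_std :: "nat \<Rightarrow> nat \<Rightarrow> (nat \<Rightarrow> nat) \<Rightarrow> real" where
  "x_std n m p = real (Omega_star n m p) / (2 * real m) ^ n"

definition x_strict :: "nat \<Rightarrow> nat \<Rightarrow> (nat \<Rightarrow> nat) \<Rightarrow> real" where
  "x_strict n m p = real (Omega_plus n m p) / (real m) ^ n"

definition Pk :: "nat \<Rightarrow> ((nat \<Rightarrow> nat) \<Rightarrow> real) \<Rightarrow> (nat \<Rightarrow> (nat \<Rightarrow> nat) \<Rightarrow> nat) \<Rightarrow> nat \<Rightarrow> real" where
  "Pk n P st k = P (SOME p. p permutes {1..n} \<and> st n p = k)"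

definition sep :: "nat \<Rightarrow> ((nat \<Rightarrow> nat) \<Rightarrow> real) \<Rightarrow> real" where
  "sep n P = Max ((\<lambda>p. 1 - fact n * P p) ` {p. p permutes {1..n}})"

definition linf_dist :: "nat \<Rightarrow> ((nat \<Rightarrow> nat) \<Rightarrow> real) \<Rightarrow> real" where
  "linf_dist n P = Max ((\<lambda>p. \<bar>1 - fact n * P p\<bar>) ` {p. p permutes {1..n}})"

definition sep_linf_extremal :: "nat \<Rightarrow> ((nat \<Rightarrow> nat) \<Rightarrow> real) \<Rightarrow> (nat \<Rightarrow> (nat \<Rightarrow> nat) \<Rightarrow> nat) \<Rightarrow> nat \<Rightarrow> bool" where
  "sep_linf_extremal n P st kmax \<longleftrightarrow>
     sep n P = max (1 - fact n * Pk n P st 0) (1 - fact n * Pk n P st kmax) \<and>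
     linf_dist n P = max \<bar>1 - fact n * Pk n P st 0\<bar> \<bar>1 - fact n * Pk n P st kmax\<bar>"

end

theory Submission
  imports Defs
begin


definition cnd :: "bool \<Rightarrow> int \<Rightarrow> int \<Rightarrow> bool" where
  "cnd b x y = (if b then prec_minus x y else prec_plus x y)"

lemma cnd_iff:
  "cnd b x y \<longleftrightarrow> \<bar>x\<bar> < \<bar>y\<bar> \<or> (\<bar>x\<bar> = \<bar>y\<bar> \<and> (if b then x < 0 else 0 \<le> y))"
  unfolding cnd_def prec_minus_def prec_plus_def zless_def zkey_def
  by (cases b) (auto split: if_splits)

lemma cnd_pos:
  assumes "0 < x" "0 < y"
  shows "cnd True x y \<Longrightarrow> cnd b x y" and "cnd b x y \<Longrightarrow> cnd False x y"
  using assms unfolding cnd_iff by (cases b; auto)+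

definition Gs :: "nat \<Rightarrow> nat \<Rightarrow> (nat \<Rightarrow> bool) \<Rightarrow> int set \<Rightarrow> (nat \<Rightarrow> int) set" where
  "Gs a b w V = {g \<in> {a..b} \<rightarrow>\<^sub>E V. \<forall>i\<in>{a..<b}. cnd (w i) (g i) (g (Suc i))}"

lemma finite_Gs: "finite V \<Longrightarrow> finite (Gs a b w V)"
  unfolding Gs_def by (rule finite_subset[of _ "{a..b} \<rightarrow>\<^sub>E V"]) (auto intro: finite_PiE)

definition wd :: "(nat \<Rightarrow> nat) \<Rightarrow> nat \<Rightarrow> bool" where
  "wd p i = (p (Suc i) < p i)"

lemma ppart_iff:
  assumes "p permutes {1..n}"
  shows "is_ppart n p f \<longleftrightarrow> (\<forall>i\<in>{1..<n}. cnd (wd p i) (f (p i)) (f (p (Suc i))))"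
proof -
  have ne: "p i \<noteq> p (Suc i)" for i
    using permutes_inj[OF assms] by (metis injD n_not_Suc_n)
  show ?thesis
    unfolding is_ppart_def cnd_def wd_def
    using ne ne[symmetric] by (auto simp: not_less_iff_gr_or_eq)
qed

lemma omega_Gs:
  assumes "p permutes {1..n}"
  shows "card {f \<in> {1..n} \<rightarrow>\<^sub>E V. is_ppart n p f} = card (Gs 1 n (wd p) V)"
proof -
  have pin: "p x \<in> {1..n} \<longleftrightarrow> x \<in> {1..n}" for x using permutes_in_image[OF assms] .
  have ip: "inv p permutes {1..n}" using permutes_inv[OF assms] .
  have iin: "inv p x \<in> {1..n} \<longleftrightarrow> x \<in> {1..n}" for x using permutes_in_image[OF ip] .
  have iin2: "Suc 0 \<le> inv p x \<and> inv p x \<le> n \<longleftrightarrow> Suc 0 \<le> x \<and> x \<le> n" for x using iin[of x] by auto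
  have pin2: "Suc 0 \<le> p x \<and> p x \<le> n \<longleftrightarrow> Suc 0 \<le> x \<and> x \<le> n" for x using pin[of x] by auto
  have i1: "inv p (p x) = x" for x using permutes_inverses(2)[OF assms] .
  have i2: "p (inv p x) = x" for x using permutes_inverses(1)[OF assms] .
  show ?thesis
  proof (rule bij_betw_same_card[of "\<lambda>f. restrict (f \<circ> p) {1..n}"], rule bij_betw_byWitness[where f'="\<lambda>g. restrict (g \<circ> inv p) {1..n}"])
    show "\<forall>f\<in>{f \<in> {1..n} \<rightarrow>\<^sub>E V. is_ppart n p f}. restrict (restrict (f \<circ> p) {1..n} \<circ> inv p) {1..n} = f"
      using iin2 by (auto simp: fun_eq_iff i2 PiE_def extensional_def)
    show "\<forall>g\<in>Gs 1 n (wd p) V. restrict (restrict (g \<circ> inv p) {1..n} \<circ> p) {1..n} = g"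
      using pin2 by (auto simp: Gs_def fun_eq_iff i1 PiE_def extensional_def)
    show "(\<lambda>f. restrict (f \<circ> p) {1..n}) ` {f \<in> {1..n} \<rightarrow>\<^sub>E V. is_ppart n p f} \<subseteq> Gs 1 n (wd p) V"
      using pin by (auto simp: Gs_def ppart_iff[OF assms] PiE_def Pi_def)
    show "(\<lambda>g. restrict (g \<circ> inv p) {1..n}) ` Gs 1 n (wd p) V \<subseteq> {f \<in> {1..n} \<rightarrow>\<^sub>E V. is_ppart n p f}"
    proof
      fix f assume "f \<in> (\<lambda>g. restrict (g \<circ> inv p) {1..n}) ` Gs 1 n (wd p) V"
      then obtain g where g: "g \<in> Gs 1 n (wd p) V" and f: "f = restrict (g \<circ> inv p) {1..n}" by auto
      have fp: "x \<in> {1..n} \<Longrightarrow> f (p x) = g x" for x using f pin i1 by auto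
      show "f \<in> {f \<in> {1..n} \<rightarrow>\<^sub>E V. is_ppart n p f}"
        using g iin unfolding Gs_def ppart_iff[OF assms] f
        using pin2 by (auto simp: PiE_def Pi_def i1)
    qed
  qed
qed



definition Sg :: "nat \<Rightarrow> nat \<Rightarrow> (nat \<Rightarrow> bool) \<Rightarrow> nat \<Rightarrow> nat set \<Rightarrow> (nat \<Rightarrow> int) set" where
 "Sg a b w m H0 = {g \<in> Gs a b w {- int m..int m}. nat \<bar>g a\<bar> \<in> H0}"

definition Dm :: "nat \<Rightarrow> nat \<Rightarrow> nat \<Rightarrow> nat set \<Rightarrow> (nat \<times> (nat \<Rightarrow> nat)) set" where
 "Dm a b m H0 = {(h0, d). h0 \<in> H0 \<and> d \<in> {a..<b} \<rightarrow>\<^sub>E UNIV \<and> h0 + sum d {a..<b} \<le> m}"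

definition dec :: "nat \<Rightarrow> nat \<times> (nat \<Rightarrow> nat) \<Rightarrow> nat \<Rightarrow> nat" where
 "dec a x i = fst x + sum (snd x) {a..<i}"

definition fib :: "nat \<Rightarrow> nat \<Rightarrow> (nat \<Rightarrow> bool) \<Rightarrow> nat \<Rightarrow> nat set \<Rightarrow> nat \<times> (nat \<Rightarrow> nat) \<Rightarrow> (nat \<Rightarrow> int) set" where
 "fib a b w m H0 x = {g \<in> Sg a b w m H0. \<forall>i\<in>{a..b}. nat \<bar>g i\<bar> = dec a x i}"

lemma Gs_mono_abs:
  assumes "g \<in> Gs a b w V" "i \<in> {a..<b}"
  shows "\<bar>g i\<bar> \<le> \<bar>g (Suc i)\<bar>"
proof -
  have "cnd (w i) (g i) (g (Suc i))" using assms by (auto simp: Gs_def)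
  then show ?thesis unfolding cnd_iff by auto
qed

lemma telesc:
  assumes "g \<in> Gs a b w V" "a \<le> i" "i \<le> b"
  shows "nat \<bar>g a\<bar> + sum (\<lambda>j. nat \<bar>g (Suc j)\<bar> - nat \<bar>g j\<bar>) {a..<i} = nat \<bar>g i\<bar>"
  using assms(2,3)
proof (induction i rule: dec_induct)
  case base
  then show ?case by simp
next
  case (step i)
  have "\<bar>g i\<bar> \<le> \<bar>g (Suc i)\<bar>" using Gs_mono_abs[OF assms(1)] step by auto
  then have "nat \<bar>g i\<bar> \<le> nat \<bar>g (Suc i)\<bar>" by simp
  then show ?case using step sum.atLeastLessThan_Suc[of a i "\<lambda>j. nat \<bar>g (Suc j)\<bar> - nat \<bar>g j\<bar>"] by linarith
qed

lemma finite_Dm: "finite (Dm a b m H0)"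
proof (rule finite_subset)
  show "Dm a b m H0 \<subseteq> {0..m} \<times> ({a..<b} \<rightarrow>\<^sub>E {0..m})"
  proof
    fix x assume x: "x \<in> Dm a b m H0"
    obtain h0 d where xd: "x = (h0, d)" by (cases x)
    have d: "d \<in> {a..<b} \<rightarrow>\<^sub>E UNIV" "h0 + sum d {a..<b} \<le> m" using x xd by (auto simp: Dm_def)
    have "d i \<le> m" if "i \<in> {a..<b}" for i
      using member_le_sum[of i "{a..<b}" d] that d by auto
    then show "x \<in> {0..m} \<times> ({a..<b} \<rightarrow>\<^sub>E {0..m})" using d xd by (auto simp: PiE_def Pi_def)
  qed
  show "finite ({0..m} \<times> ({a..<b} \<rightarrow>\<^sub>E {0..m}))" by (intro finite_cartesian_product finite_PiE) auto
qed

lemma finite_Sg: "finite (Sg a b w m H0)"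
  unfolding Sg_def by (rule finite_subset[OF _ finite_Gs[of "{- int m..int m}" a b w]]) auto

lemma dec_inj:
  assumes "a \<le> b" "x \<in> Dm a b m H0" "y \<in> Dm a b m H0" "\<forall>i\<in>{a..b}. dec a x i = dec a y i"
  shows "x = y"
proof -
  obtain h0 d where x: "x = (h0, d)" by (cases x)
  obtain h0' d' where y: "y = (h0', d')" by (cases y)
  have ext: "d \<in> extensional {a..<b}" "d' \<in> extensional {a..<b}" using assms(2,3) x y by (auto simp: Dm_def PiE_def)
  have h: "h0 = h0'" using assms(1) assms(4)[rule_format, of a] x y by (auto simp: dec_def)
  have "d i = d' i" for i
  proof (cases "i \<in> {a..<b}")
    case True
    have "dec a x (Suc i) - dec a x i = d i" using True x by (simp add: dec_def sum.atLeastLessThan_Suc)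
    moreover have "dec a y (Suc i) - dec a y i = d' i" using True y by (simp add: dec_def sum.atLeastLessThan_Suc)
    ultimately show ?thesis using assms(4) True by auto
  next
    case False then show ?thesis using ext by (auto simp: extensional_def)
  qed
  then show ?thesis using x y h by auto
qed

lemma card_Sg: "a \<le> b \<Longrightarrow> card (Sg a b w m H0) = (\<Sum>x\<in>Dm a b m H0. card (fib a b w m H0 x))"
proof -
  assume "a \<le> b"
  have eq: "Sg a b w m H0 = (\<Union>x\<in>Dm a b m H0. fib a b w m H0 x)"
  proof
    show "(\<Union>x\<in>Dm a b m H0. fib a b w m H0 x) \<subseteq> Sg a b w m H0" by (auto simp: fib_def)
    show "Sg a b w m H0 \<subseteq> (\<Union>x\<in>Dm a b m H0. fib a b w m H0 x)"
    proof
      fix g assume g: "g \<in> Sg a b w m H0"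
      then have gG: "g \<in> Gs a b w {- int m..int m}" and gH: "nat \<bar>g a\<bar> \<in> H0" by (auto simp: Sg_def)
      define x where "x = (nat \<bar>g a\<bar>, restrict (\<lambda>j. nat \<bar>g (Suc j)\<bar> - nat \<bar>g j\<bar>) {a..<b})"
      have dx: "dec a x i = nat \<bar>g i\<bar>" if "i \<in> {a..b}" for i
      proof -
        have "dec a x i = nat \<bar>g a\<bar> + sum (\<lambda>j. nat \<bar>g (Suc j)\<bar> - nat \<bar>g j\<bar>) {a..<i}"
          unfolding dec_def x_def using that by (auto intro!: sum.cong)
        also have "\<dots> = nat \<bar>g i\<bar>" using telesc[OF gG] that by auto
        finally show ?thesis .
      qed
      have "dec a x b = nat \<bar>g b\<bar>" using dx \<open>a \<le> b\<close> by auto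
      moreover have "\<bar>g b\<bar> \<le> m" using gG \<open>a \<le> b\<close> by (auto simp: Gs_def PiE_def Pi_def)
      ultimately have "x \<in> Dm a b m H0" using gH unfolding Dm_def x_def dec_def by auto
      moreover have "g \<in> fib a b w m H0 x" using g dx by (auto simp: fib_def)
      ultimately show "g \<in> (\<Union>x\<in>Dm a b m H0. fib a b w m H0 x)" by auto
    qed
  qed
  show ?thesis unfolding eq
  proof (rule card_UN_disjoint)
    show "finite (Dm a b m H0)" by (rule finite_Dm)
    show "\<forall>x\<in>Dm a b m H0. finite (fib a b w m H0 x)"
      using finite_Sg by (auto simp: fib_def)
    show "\<forall>x\<in>Dm a b m H0. \<forall>y\<in>Dm a b m H0. x \<noteq> y \<longrightarrow> fib a b w m H0 x \<inter> fib a b w m H0 y = {}"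
      using dec_inj[OF \<open>a \<le> b\<close>] by (fastforce simp: fib_def)
  qed
qed



lemma card_between:
  assumes "finite B"
  shows "card {N. A \<subseteq> N \<and> N \<subseteq> B} = (if A \<subseteq> B then 2 ^ card (B - A) else 0)"
proof (cases "A \<subseteq> B")
  case True
  have "bij_betw (\<lambda>M. M \<union> A) (Pow (B - A)) {N. A \<subseteq> N \<and> N \<subseteq> B}"
    by (rule bij_betw_byWitness[where f'="\<lambda>N. N - A"]) (use True in auto)
  then have "card {N. A \<subseteq> N \<and> N \<subseteq> B} = card (Pow (B - A))" by (simp add: bij_betw_same_card)
  then show ?thesis using True assms by (simp add: card_Pow)
next
  case False
  then have e: "{N. A \<subseteq> N \<and> N \<subseteq> B} = {}" by auto
  show ?thesis unfolding e using False by simp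
qed

definition suppC :: "nat \<Rightarrow> nat \<Rightarrow> (nat \<Rightarrow> nat) \<Rightarrow> nat set" where
  "suppC a b d = {i\<in>{a..<b}. 0 < d i}"

definition Fm :: "nat \<Rightarrow> nat \<Rightarrow> (nat \<Rightarrow> bool) \<Rightarrow> nat set \<Rightarrow> nat set" where
  "Fm a b w C = {i\<in>{a..<b}. i \<notin> C \<and> w i}"

definition Fp :: "nat \<Rightarrow> nat \<Rightarrow> (nat \<Rightarrow> bool) \<Rightarrow> nat set \<Rightarrow> nat set" where
  "Fp a b w C = Suc ` {i\<in>{a..<b}. i \<notin> C \<and> \<not> w i}"

lemma dec_Suc: "a \<le> i \<Longrightarrow> dec a x (Suc i) = dec a x i + snd x i"
  by (simp add: dec_def sum.atLeastLessThan_Suc)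

lemma dec_le:
  assumes "x \<in> Dm a b m H0" "i \<le> b"
  shows "dec a x i \<le> m"
proof -
  have "sum (snd x) {a..<i} \<le> sum (snd x) {a..<b}" using assms(2) by (intro sum_mono2) auto
  then show ?thesis using assms(1) by (auto simp: Dm_def dec_def)
qed

lemma card_fib:
  assumes x: "x \<in> Dm a b m H0" and ab: "a \<le> b"
  defines "h \<equiv> dec a x"
  defines "C \<equiv> suppC a b (snd x)"
  shows "card (fib a b w m H0 x) =
     card {N. Fm a b w C \<subseteq> N \<and> N \<subseteq> {i\<in>{a..b}. 0 < h i} - Fp a b w C}"
proof (rule bij_betw_same_card, rule bij_betw_byWitness[where f'="\<lambda>N. (\<lambda>i\<in>{a..b}. if i \<in> N then - int (h i) else int (h i))"])
  have hS: "h (Suc i) = h i + snd x i" if "a \<le> i" for i using dec_Suc[OF that] h_def by simp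
  have hm: "h i \<le> m" if "i \<le> b" for i using dec_le[OF x that] h_def by simp
  have ha: "h a \<in> H0" using x by (auto simp: h_def dec_def Dm_def)
  have inC: "i \<in> C \<longleftrightarrow> i \<in> {a..<b} \<and> 0 < snd x i" for i by (auto simp: C_def suppC_def)
  show "\<forall>g\<in>fib a b w m H0 x. (\<lambda>i\<in>{a..b}. if i \<in> {i \<in> {a..b}. g i < 0} then - int (h i) else int (h i)) = g"
  proof
    fix g assume g: "g \<in> fib a b w m H0 x"
    then have gh: "\<And>i. i \<in> {a..b} \<Longrightarrow> h i = nat \<bar>g i\<bar>" and ex: "g \<in> extensional {a..b}"
      by (auto simp: fib_def Sg_def Gs_def PiE_def h_def)
    show "(\<lambda>i\<in>{a..b}. if i \<in> {i \<in> {a..b}. g i < 0} then - int (h i) else int (h i)) = g"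
    proof
      fix i show "(\<lambda>i\<in>{a..b}. if i \<in> {i \<in> {a..b}. g i < 0} then - int (h i) else int (h i)) i = g i"
        using gh[of i] ex by (cases "i \<in> {a..b}") (auto simp: extensional_def)
    qed
  qed
  show "\<forall>N\<in>{N. Fm a b w C \<subseteq> N \<and> N \<subseteq> {i \<in> {a..b}. 0 < h i} - Fp a b w C}.
     {i \<in> {a..b}. (\<lambda>i\<in>{a..b}. if i \<in> N then - int (h i) else int (h i)) i < 0} = N"
    by auto
  show "(\<lambda>g. {i \<in> {a..b}. g i < 0}) ` fib a b w m H0 x \<subseteq> {N. Fm a b w C \<subseteq> N \<and> N \<subseteq> {i \<in> {a..b}. 0 < h i} - Fp a b w C}"
  proof (rule image_subsetI)
    fix g assume g: "g \<in> fib a b w m H0 x"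
    then have gG: "g \<in> Gs a b w {- int m..int m}" and gh: "\<And>i. i \<in> {a..b} \<Longrightarrow> nat \<bar>g i\<bar> = h i"
      by (auto simp: fib_def Sg_def h_def)
    have cn: "cnd (w i) (g i) (g (Suc i))" if "i \<in> {a..<b}" for i using gG that by (auto simp: Gs_def)
    have eqabs: "\<bar>g i\<bar> = \<bar>g (Suc i)\<bar>" if "i \<in> {a..<b}" "i \<notin> C" for i
    proof -
      have "h (Suc i) = h i" using hS[of i] that inC[of i] by auto
      then show ?thesis using gh[of i] gh[of "Suc i"] that by auto
    qed
    have 1: "Fm a b w C \<subseteq> {i \<in> {a..b}. g i < 0}"
    proof
      fix i assume "i \<in> Fm a b w C"
      then show "i \<in> {i \<in> {a..b}. g i < 0}"
        using cn[of i] eqabs[of i] unfolding cnd_iff by (auto simp: Fm_def)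
    qed
    have 2: "{i \<in> {a..b}. g i < 0} \<subseteq> {i \<in> {a..b}. 0 < h i}"
      using gh by fastforce
    have 3: "False" if a1: "i \<in> {i \<in> {a..b}. g i < 0}" and a2: "i \<in> Fp a b w C" for i
    proof -
      obtain j where j: "i = Suc j" "j \<in> {a..<b}" "j \<notin> C" "\<not> w j" using a2 by (auto simp: Fp_def)
      show False using cn[of j] eqabs[of j] j a1 unfolding cnd_iff by auto
    qed
    show "{i \<in> {a..b}. g i < 0} \<in> {N. Fm a b w C \<subseteq> N \<and> N \<subseteq> {i \<in> {a..b}. 0 < h i} - Fp a b w C}"
      using 1 2 3 by blast
  qed
  show "(\<lambda>N. \<lambda>i\<in>{a..b}. if i \<in> N then - int (h i) else int (h i)) ` {N. Fm a b w C \<subseteq> N \<and> N \<subseteq> {i \<in> {a..b}. 0 < h i} - Fp a b w C} \<subseteq> fib a b w m H0 x"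
  proof safe
    fix N assume N1: "Fm a b w C \<subseteq> N" and N2: "N \<subseteq> {i \<in> {a..b}. 0 < h i} - Fp a b w C"
    define g where "g = (\<lambda>i\<in>{a..b}. if i \<in> N then - int (h i) else int (h i))"
    have ga: "\<bar>g i\<bar> = int (h i)" if "i \<in> {a..b}" for i using that by (auto simp: g_def)
    have gv: "g \<in> {a..b} \<rightarrow>\<^sub>E {- int m..int m}" using hm by (auto simp: g_def)
    have cn: "cnd (w i) (g i) (g (Suc i))" if i: "i \<in> {a..<b}" for i
    proof (cases "i \<in> C")
      case True
      then have "h i < h (Suc i)" using hS[of i] inC[of i] i by auto
      then show ?thesis unfolding cnd_iff using ga[of i] ga[of "Suc i"] i by auto
    next
      case False
      then have he: "h (Suc i) = h i" using hS[of i] inC[of i] i by auto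
      show ?thesis
      proof (cases "w i")
        case True
        then have "i \<in> N" using N1 False i by (auto simp: Fm_def)
        then have "g i < 0" using N2 i by (auto simp: g_def)
        then show ?thesis unfolding cnd_iff using ga[of i] ga[of "Suc i"] i he True by auto
      next
        case wF: False
        then have "Suc i \<in> Fp a b w C" using False i by (auto simp: Fp_def)
        then have "Suc i \<notin> N" using N2 by auto
        then have "0 \<le> g (Suc i)" using i by (auto simp: g_def)
        then show ?thesis unfolding cnd_iff using ga[of i] ga[of "Suc i"] i he wF by auto
      qed
    qed
    have "nat \<bar>g a\<bar> \<in> H0" using ga[of a] ab ha by auto
    then show "g \<in> fib a b w m H0 x"
      using gv cn ga by (auto simp: fib_def Sg_def Gs_def h_def)
  qed
qed



definition hits :: "nat \<Rightarrow> nat \<Rightarrow> (nat \<Rightarrow> bool) \<Rightarrow> nat set \<Rightarrow> bool" where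
  "hits a b w C = (\<forall>i. a \<le> i \<longrightarrow> Suc i < b \<longrightarrow> \<not> w i \<longrightarrow> w (Suc i) \<longrightarrow> i \<in> C \<or> Suc i \<in> C)"

lemma Fp_iff: "i \<in> Fp a b w C \<longleftrightarrow> (a < i \<and> i \<le> b \<and> i - 1 \<notin> C \<and> \<not> w (i - 1))"
proof
  assume "i \<in> Fp a b w C"
  then obtain j where "i = Suc j" "j \<in> {a..<b}" "j \<notin> C" "\<not> w j" by (auto simp: Fp_def)
  then show "a < i \<and> i \<le> b \<and> i - 1 \<notin> C \<and> \<not> w (i - 1)" by auto
next
  assume h: "a < i \<and> i \<le> b \<and> i - 1 \<notin> C \<and> \<not> w (i - 1)"
  then have "i = Suc (i - 1)" "i - 1 \<in> {i\<in>{a..<b}. i \<notin> C \<and> \<not> w i}" by auto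
  then show "i \<in> Fp a b w C" unfolding Fp_def by (metis imageI)
qed

lemma Fm_iff: "i \<in> Fm a b w C \<longleftrightarrow> (a \<le> i \<and> i < b \<and> i \<notin> C \<and> w i)"
  by (auto simp: Fm_def)

lemma FmFp_disj: "Fm a b w C \<inter> Fp a b w C = {} \<longleftrightarrow> hits a b w C"
proof
  assume d: "Fm a b w C \<inter> Fp a b w C = {}"
  show "hits a b w C" unfolding hits_def
  proof (intro allI impI)
    fix i assume "a \<le> i" "Suc i < b" "\<not> w i" "w (Suc i)"
    then show "i \<in> C \<or> Suc i \<in> C" using d Fm_iff[of "Suc i" a b w C] Fp_iff[of "Suc i" a b w C] by auto
  qed
next
  assume h: "hits a b w C"
  show "Fm a b w C \<inter> Fp a b w C = {}"
  proof (rule ccontr)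
    assume "Fm a b w C \<inter> Fp a b w C \<noteq> {}"
    then obtain j where j: "j \<in> Fm a b w C" "j \<in> Fp a b w C" by auto
    then have "a < j" "j < b" "j \<notin> C" "w j" "j - 1 \<notin> C" "\<not> w (j - 1)" using Fm_iff Fp_iff by auto
    then have "a \<le> j - 1" "Suc (j - 1) < b" "\<not> w (j - 1)" "w (Suc (j - 1))" "j - 1 \<notin> C" "Suc (j - 1) \<notin> C" by auto
    then show False using h unfolding hits_def by blast
  qed
qed

lemma filt_ins: "{i \<in> insert b S. P i} = (if P b then insert b {i\<in>S. P i} else {i\<in>S. P i})" by auto


lemma hits_Suc: "hits a (Suc b) w C \<Longrightarrow> hits a b w C"
  unfolding hits_def by auto

lemma free_count:
  assumes "a \<le> b" "hits a b w C"
  shows "card {i\<in>{a..<b}. (a < i \<longrightarrow> i - 1 \<in> C \<or> w (i - 1)) \<and> (i \<in> C \<or> \<not> w i)}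
         + (if (a < b \<longrightarrow> b - 1 \<in> C \<or> w (b - 1)) then 1 else 0) = card (C \<inter> {a..<b}) + 1"
  using assms
proof (induction b rule: dec_induct)
  case base
  then show ?case by simp
next
  case (step b)
  let ?P = "\<lambda>i. (a < i \<longrightarrow> i - 1 \<in> C \<or> w (i - 1)) \<and> (i \<in> C \<or> \<not> w i)"
  have IH: "card {i\<in>{a..<b}. ?P i} + (if (a < b \<longrightarrow> b - 1 \<in> C \<or> w (b - 1)) then 1 else 0) = card (C \<inter> {a..<b}) + 1"
    using step hits_Suc by blast
  have ins: "{a..<Suc b} = insert b {a..<b}" using step(1) by auto
  have s1: "{i\<in>{a..<Suc b}. ?P i} = (if ?P b then insert b {i\<in>{a..<b}. ?P i} else {i\<in>{a..<b}. ?P i})"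
    unfolding ins by (rule filt_ins)
  have c1: "card {i\<in>{a..<Suc b}. ?P i} = card {i\<in>{a..<b}. ?P i} + (if ?P b then 1 else 0)"
    unfolding s1 by auto
  have s2: "C \<inter> {a..<Suc b} = (if b \<in> C then insert b (C \<inter> {a..<b}) else C \<inter> {a..<b})"
    unfolding ins by auto
  have c2: "card (C \<inter> {a..<Suc b}) = card (C \<inter> {a..<b}) + (if b \<in> C then 1 else 0)"
    unfolding s2 by auto
  have key: "b \<notin> C \<Longrightarrow> w b \<Longrightarrow> (a < b \<longrightarrow> b - 1 \<in> C \<or> w (b - 1))"
  proof (intro impI)
    assume "b \<notin> C" "w b" "a < b"
    then show "b - 1 \<in> C \<or> w (b - 1)"
      using step(4) unfolding hits_def by (metis Suc_diff_1 Suc_le_eq le0 lessI less_imp_Suc_add not_less_eq_eq plus_1_eq_Suc)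
  qed
  show ?case using IH c1 c2 key step(1) by (auto split: if_splits)
qed

lemma free_std:
  assumes "a \<le> b" "hits a b w C" "C \<subseteq> {a..<b}"
  shows "card ({a..b} - Fp a b w C - Fm a b w C) = card C + 1"
proof -
  let ?P = "\<lambda>i. (a < i \<longrightarrow> i - 1 \<in> C \<or> w (i - 1)) \<and> (i \<in> C \<or> \<not> w i)"
  let ?L = "(a < b \<longrightarrow> b - 1 \<in> C \<or> w (b - 1))"
  have e: "{a..b} - Fp a b w C - Fm a b w C = {i\<in>{a..<b}. ?P i} \<union> (if ?L then {b} else {})"
  proof (rule set_eqI)
    fix i
    show "i \<in> {a..b} - Fp a b w C - Fm a b w C \<longleftrightarrow> i \<in> {i\<in>{a..<b}. ?P i} \<union> (if ?L then {b} else {})"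
      using assms(1) Fp_iff[of i a b w C] Fm_iff[of i a b w C]
      by (cases "i < b"; cases "i = b") auto
  qed
  have "card ({a..b} - Fp a b w C - Fm a b w C) = card {i\<in>{a..<b}. ?P i} + (if ?L then 1 else 0)"
    unfolding e by auto
  also have "\<dots> = card (C \<inter> {a..<b}) + 1" using free_count[OF assms(1,2)] by simp
  also have "C \<inter> {a..<b} = C" using assms(3) by auto
  finally show ?thesis .
qed

lemma suppC_sub: "suppC a b d \<subseteq> {a..<b}" by (auto simp: suppC_def)

lemma card_fib_std:
  assumes x: "x \<in> Dm a b m {1..m}" and ab: "a \<le> b"
  shows "card (fib a b w m {1..m} x) =
     (if hits a b w (suppC a b (snd x)) then 2 ^ (card (suppC a b (snd x)) + 1) else 0)"
proof -
  let ?C = "suppC a b (snd x)"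
  have pos: "{i\<in>{a..b}. 0 < dec a x i} = {a..b}"
    using x by (auto simp: dec_def Dm_def)
  have "card (fib a b w m {1..m} x) = card {N. Fm a b w ?C \<subseteq> N \<and> N \<subseteq> {a..b} - Fp a b w ?C}"
    using card_fib[OF x ab, of w] unfolding pos .
  also have "\<dots> = (if Fm a b w ?C \<subseteq> {a..b} - Fp a b w ?C then 2 ^ card ({a..b} - Fp a b w ?C - Fm a b w ?C) else 0)"
    by (rule card_between) auto
  also have "(Fm a b w ?C \<subseteq> {a..b} - Fp a b w ?C) = hits a b w ?C"
    using FmFp_disj[of a b w ?C] by (auto simp: Fm_def)
  finally show ?thesis using free_std[OF ab _ suppC_sub] by auto
qed

lemma allA:
  assumes "\<not> w 0" "hits 0 b w C" "k < b" "\<forall>j\<le>k. j \<notin> C" "j \<le> k"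
  shows "\<not> w j"
  using assms(5)
proof (induction j)
  case 0 then show ?case using assms(1) by simp
next
  case (Suc j)
  then have "\<not> w j" by simp
  moreover have "j \<notin> C" "Suc j \<notin> C" using assms(4) Suc by auto
  ultimately show ?case using assms(2,3) Suc unfolding hits_def by force
qed

lemma card_fib_lazy:
  assumes x: "x \<in> Dm 0 b m {0}" and w0: "\<not> w 0"
  shows "card (fib 0 b w m {0} x) =
     (if hits 0 b w (suppC 0 b (snd x)) then 2 ^ (card (suppC 0 b (snd x))) else 0)"
proof -
  let ?C = "suppC 0 b (snd x)"
  let ?Pos = "{i\<in>{0..b}. 0 < dec 0 x i}"
  have h0: "fst x = 0" using x by (auto simp: Dm_def)
  have dext: "snd x \<in> extensional {0..<b}" using x by (auto simp: Dm_def PiE_def)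
  have zero: "dec 0 x i = 0 \<longleftrightarrow> (\<forall>j<i. j \<notin> ?C)" if "i \<le> b" for i
    using that h0 by (auto simp: dec_def suppC_def)
  have inFp: "i \<in> Fp 0 b w ?C" if t1: "hits 0 b w ?C" and t2: "i \<in> {0..b}" and t3: "i \<notin> ?Pos" and t4: "i \<noteq> 0" for i
  proof -
    obtain k where k: "i = Suc k" using t4 by (cases i) auto
    have nc: "\<forall>j\<le>k. j \<notin> ?C" using zero[of i] t2 t3 k by auto
    have "\<not> w k" using allA[OF w0 t1, of k k] nc k t2 by auto
    then show ?thesis using k nc t2 unfolding Fp_iff by auto
  qed
  have FmPos: "Fm 0 b w ?C \<subseteq> ?Pos" if "hits 0 b w ?C"
  proof
    fix i assume i: "i \<in> Fm 0 b w ?C"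
    then have ib: "i < b" "i \<notin> ?C" "w i" by (auto simp: Fm_def)
    show "i \<in> ?Pos"
    proof (rule ccontr)
      assume "i \<notin> ?Pos"
      then have "\<forall>j<i. j \<notin> ?C" using zero[of i] ib by auto
      then have "\<forall>j\<le>i. j \<notin> ?C" using ib by (auto simp: le_less)
      then have "\<not> w i" using allA[OF w0 that ib(1)] by auto
      then show False using ib by simp
    qed
  qed
  have "card (fib 0 b w m {0} x) = card {N. Fm 0 b w ?C \<subseteq> N \<and> N \<subseteq> ?Pos - Fp 0 b w ?C}"
    using card_fib[OF x le0, of w] .
  also have "\<dots> = (if Fm 0 b w ?C \<subseteq> ?Pos - Fp 0 b w ?C then 2 ^ card (?Pos - Fp 0 b w ?C - Fm 0 b w ?C) else 0)"
    by (rule card_between) auto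
  also have "(Fm 0 b w ?C \<subseteq> ?Pos - Fp 0 b w ?C) = hits 0 b w ?C"
    using FmFp_disj[of 0 b w ?C] FmPos by auto
  finally have eq: "card (fib 0 b w m {0} x) = (if hits 0 b w ?C then 2 ^ card (?Pos - Fp 0 b w ?C - Fm 0 b w ?C) else 0)" .
  show ?thesis
  proof (cases "hits 0 b w ?C")
    case True
    have d0: "dec 0 x 0 = 0" using h0 by (simp add: dec_def)
    have e2: "?Pos - Fp 0 b w ?C - Fm 0 b w ?C = ({0..b} - Fp 0 b w ?C - Fm 0 b w ?C) - {0}"
    proof (rule set_eqI)
      fix i
      show "i \<in> ?Pos - Fp 0 b w ?C - Fm 0 b w ?C \<longleftrightarrow> i \<in> ({0..b} - Fp 0 b w ?C - Fm 0 b w ?C) - {0}"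
      proof (cases "i = 0")
        case True then show ?thesis using d0 by auto
      next
        case False
        then show ?thesis using inFp[OF True, of i] by auto
      qed
    qed
    have z: "0 \<in> {0..b} - Fp 0 b w ?C - Fm 0 b w ?C" using w0 by (auto simp: Fp_def Fm_def)
    have "card (?Pos - Fp 0 b w ?C - Fm 0 b w ?C) = card ?C + 1 - 1"
      unfolding e2 using free_std[OF le0 True suppC_sub] z by (simp add: card_Diff_singleton)
    then show ?thesis using eq True by simp
  next
    case False then show ?thesis using eq by simp
  qed
qed



definition Nsum :: "nat \<Rightarrow> nat \<Rightarrow> nat \<Rightarrow> nat set \<Rightarrow> nat \<Rightarrow> (nat \<Rightarrow> bool) \<Rightarrow> nat" where
  "Nsum a b m H0 c0 w = (\<Sum>x\<in>Dm a b m H0.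
     (if hits a b w (suppC a b (snd x)) then 2 ^ (card (suppC a b (snd x)) + c0) else 0))"

lemma card_Sg_std: "a \<le> b \<Longrightarrow> card (Sg a b w m {1..m}) = Nsum a b m {1..m} 1 w"
  unfolding Nsum_def card_Sg by (intro sum.cong refl card_fib_std) auto

lemma card_Sg_lazy: assumes "\<not> w 0" shows "card (Sg 0 b w m {0}) = Nsum 0 b m {0} 0 w"
  unfolding Nsum_def card_Sg[OF le0]
proof (intro sum.cong refl)
  fix x assume xD: "x \<in> Dm 0 b m {0}"
  then show "card (fib 0 b w m {0} x) = (if hits 0 b w (suppC 0 b (snd x)) then 2 ^ (card (suppC 0 b (snd x)) + 0) else 0)"
    using card_fib_lazy[where w=w, OF xD assms] by simp
qed

lemma Nsum_upper:
  assumes "\<forall>C. hits a b w0 C"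
  shows "Nsum a b m H0 c0 w \<le> Nsum a b m H0 c0 w0"
  unfolding Nsum_def using assms by (intro sum_mono) auto

definition Lp :: "nat \<Rightarrow> nat \<Rightarrow> (nat \<Rightarrow> bool) \<Rightarrow> nat set" where
  "Lp a b w = {i. a \<le> i \<and> Suc i < b \<and> \<not> w i \<and> w (Suc i)}"

lemma Lp_sub: "Lp a b w \<subseteq> {a..<b}" by (auto simp: Lp_def)
lemma finite_Lp: "finite (Lp a b w)" by (rule finite_subset[OF Lp_sub]) simp

lemma extend_bij:
  assumes "finite L" "A \<subseteq> L" "inj_on f A" "f ` A \<subseteq> L"
  obtains \<tau> where "bij_betw \<tau> L L" "\<forall>x\<in>A. \<tau> x = f x"
proof -
  have fA: "finite A" using assms finite_subset by blast
  have "card (L - A) = card (L - f ` A)"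
    using assms fA by (simp add: card_Diff_subset card_image)
  then obtain g where g: "bij_betw g (L - A) (L - f ` A)"
    using finite_same_card_bij assms(1) by blast
  define \<tau> where "\<tau> x = (if x \<in> A then f x else g x)" for x
  have b1: "bij_betw \<tau> A (f ` A)"
    using inj_on_imp_bij_betw[OF assms(3)] by (rule bij_betw_cong[THEN iffD1, rotated]) (auto simp: \<tau>_def)
  have b2: "bij_betw \<tau> (L - A) (L - f ` A)"
    using g by (rule bij_betw_cong[THEN iffD1, rotated]) (auto simp: \<tau>_def)
  have "bij_betw \<tau> (A \<union> (L - A)) (f ` A \<union> (L - f ` A))"
    by (rule bij_betw_combine[OF b1 b2]) auto
  moreover have "A \<union> (L - A) = L" "f ` A \<union> (L - f ` A) = L" using assms by auto
  ultimately have c1: "bij_betw \<tau> L L" by simp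
  have c2: "\<forall>x\<in>A. \<tau> x = f x" by (simp add: \<tau>_def)
  show thesis by (rule that[OF c1 c2])
qed

lemma tau_exists:
  assumes "card (Lp a b w) \<le> card (Lp a b wm)"
  obtains \<tau> where "bij_betw \<tau> {a..<b} {a..<b}"
    "\<forall>i\<in>Lp a b w. \<tau> i \<in> Lp a b wm \<and> \<tau> (Suc i) = Suc (\<tau> i)"
proof -
  obtain \<rho> where r1: "\<rho> ` Lp a b w \<subseteq> Lp a b wm" and r2: "inj_on \<rho> (Lp a b w)"
    using card_le_inj[OF finite_Lp finite_Lp assms] by blast
  have nS: "i \<in> Lp a b v \<Longrightarrow> Suc i \<notin> Lp a b v" for i v by (auto simp: Lp_def)
  define A where "A = Lp a b w \<union> Suc ` Lp a b w"
  define f where "f i = (if i \<in> Lp a b w then \<rho> i else Suc (\<rho> (i - 1)))" for i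
  have fL: "f i = \<rho> i" if "i \<in> Lp a b w" for i using that by (simp add: f_def)
  have fS: "f (Suc i) = Suc (\<rho> i)" if "i \<in> Lp a b w" for i using that nS[OF that] by (simp add: f_def)
  have rL: "\<rho> i \<in> Lp a b wm" if "i \<in> Lp a b w" for i using that r1 by blast
  have inj: "inj_on f A"
  proof (rule inj_onI)
    fix x y assume x: "x \<in> A" and y: "y \<in> A" and e: "f x = f y"
    consider (LL) "x \<in> Lp a b w" "y \<in> Lp a b w"
      | (LS) y' where "x \<in> Lp a b w" "y = Suc y'" "y' \<in> Lp a b w"
      | (SL) x' where "x = Suc x'" "x' \<in> Lp a b w" "y \<in> Lp a b w"
      | (SS) x' y' where "x = Suc x'" "x' \<in> Lp a b w" "y = Suc y'" "y' \<in> Lp a b w"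
      using x y unfolding A_def by blast
    then show "x = y"
    proof cases
      case LL
      then have "\<rho> x = \<rho> y" using e fL by simp
      then show ?thesis using inj_onD[OF r2] LL by blast
    next
      case (LS y')
      then have "\<rho> x = Suc (\<rho> y')" using e fL fS by simp
      then have False using rL[OF LS(1)] nS[OF rL[OF LS(3)]] by simp
      then show ?thesis ..
    next
      case (SL x')
      then have "\<rho> y = Suc (\<rho> x')" using e fL fS by simp
      then have False using rL[OF SL(3)] nS[OF rL[OF SL(2)]] by simp
      then show ?thesis ..
    next
      case (SS x' y')
      then have "\<rho> x' = \<rho> y'" using e fS by simp
      then show ?thesis using inj_onD[OF r2] SS by blast
    qed
  qed
  have AL: "A \<subseteq> {a..<b}" unfolding A_def by (auto simp: Lp_def)
  have fAL: "f ` A \<subseteq> {a..<b}"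
  proof
    fix z assume "z \<in> f ` A"
    then obtain i where i: "i \<in> A" "z = f i" by auto
    show "z \<in> {a..<b}"
    proof (cases "i \<in> Lp a b w")
      case True
      then have "\<rho> i \<in> Lp a b wm" using r1 by auto
      then show ?thesis using i True by (auto simp: f_def Lp_def)
    next
      case False
      then obtain i' where "i = Suc i'" "i' \<in> Lp a b w" using i A_def by auto
      then have "\<rho> i' \<in> Lp a b wm" using r1 by auto
      then show ?thesis using i False \<open>i = Suc i'\<close> by (auto simp: f_def Lp_def)
    qed
  qed
  obtain \<tau> where t1: "bij_betw \<tau> {a..<b} {a..<b}" and t2: "\<forall>x\<in>A. \<tau> x = f x"
    using extend_bij[OF _ AL inj fAL] by auto
  have "\<forall>i\<in>Lp a b w. \<tau> i \<in> Lp a b wm \<and> \<tau> (Suc i) = Suc (\<tau> i)"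
  proof
    fix i assume i: "i \<in> Lp a b w"
    have "i \<in> A" "Suc i \<in> A" using i by (auto simp: A_def)
    then have "\<tau> i = \<rho> i" "\<tau> (Suc i) = Suc (\<rho> i)" using t2 fL[OF i] fS[OF i] by auto
    then show "\<tau> i \<in> Lp a b wm \<and> \<tau> (Suc i) = Suc (\<tau> i)" using rL[OF i] by auto
  qed
  then show thesis using that t1 by auto
qed

lemma Nsum_lower:
  assumes "card (Lp a b w) \<le> card (Lp a b wm)"
  shows "Nsum a b m H0 c0 wm \<le> Nsum a b m H0 c0 w"
proof -
  obtain \<tau> where t1: "bij_betw \<tau> {a..<b} {a..<b}"
    and t2: "\<forall>i\<in>Lp a b w. \<tau> i \<in> Lp a b wm \<and> \<tau> (Suc i) = Suc (\<tau> i)"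
    using tau_exists[OF assms] by blast
  let ?L = "{a..<b}"
  have tL: "\<tau> i \<in> ?L" if "i \<in> ?L" for i using t1 that by (auto simp: bij_betw_def)
  define F where "F v x = (if hits a b v (suppC a b (snd x)) then 2 ^ (card (suppC a b (snd x)) + c0) else (0::nat))" for v and x :: "nat \<times> (nat \<Rightarrow> nat)"
  define \<psi> where "\<psi> x = (fst x, restrict (snd x \<circ> \<tau>) ?L)" for x :: "nat \<times> (nat \<Rightarrow> nat)"
  have sumeq: "sum (snd x \<circ> \<tau>) ?L = sum (snd x) ?L" for x
    using sum.reindex_bij_betw[OF t1, of "snd x"] by (simp add: comp_def)
  have psiD: "\<psi> ` Dm a b m H0 \<subseteq> Dm a b m H0"
  proof
    fix y assume "y \<in> \<psi> ` Dm a b m H0"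
    then obtain x where x: "x \<in> Dm a b m H0" "y = \<psi> x" by auto
    have "sum (restrict (snd x \<circ> \<tau>) ?L) ?L = sum (snd x) ?L"
      using sumeq[of x] by (simp add: restrict_def)
    then show "y \<in> Dm a b m H0" using x by (auto simp: Dm_def \<psi>_def)
  qed
  have inj: "inj_on \<psi> (Dm a b m H0)"
  proof (rule inj_onI)
    fix x y assume x: "x \<in> Dm a b m H0" and y: "y \<in> Dm a b m H0" and e: "\<psi> x = \<psi> y"
    have "snd x j = snd y j" for j
    proof (cases "j \<in> ?L")
      case True
      then have "j \<in> \<tau> ` ?L" using t1 by (simp add: bij_betw_def)
      then obtain i where i: "i \<in> ?L" "j = \<tau> i" by auto
      have "restrict (snd x \<circ> \<tau>) ?L i = restrict (snd y \<circ> \<tau>) ?L i" using e by (simp add: \<psi>_def)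
      then show ?thesis using i by simp
    next
      case False
      then show ?thesis using x y by (auto simp: Dm_def PiE_def extensional_def)
    qed
    moreover have "fst x = fst y" using e by (simp add: \<psi>_def)
    ultimately show "x = y" by (simp add: prod_eq_iff fun_eq_iff)
  qed
  have supp: "suppC a b (snd (\<psi> x)) = {i\<in>?L. \<tau> i \<in> suppC a b (snd x)}" for x :: "nat \<times> (nat \<Rightarrow> nat)"
    using tL by (auto simp: suppC_def \<psi>_def)
  have cardS: "card {i\<in>?L. \<tau> i \<in> S} = card S" if "S \<subseteq> ?L" for S
  proof -
    have "inj_on \<tau> {i\<in>?L. \<tau> i \<in> S}" using t1 by (auto simp: bij_betw_def inj_on_def)
    moreover have "\<tau> ` {i\<in>?L. \<tau> i \<in> S} = S"
    proof
      show "\<tau> ` {i\<in>?L. \<tau> i \<in> S} \<subseteq> S" by auto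
      show "S \<subseteq> \<tau> ` {i\<in>?L. \<tau> i \<in> S}"
      proof
        fix j assume j: "j \<in> S"
        then have "j \<in> ?L" using that by auto
        then have "j \<in> \<tau> ` ?L" using t1 by (simp add: bij_betw_def)
        then obtain i where "i \<in> ?L" "j = \<tau> i" by auto
        then show "j \<in> \<tau> ` {i\<in>?L. \<tau> i \<in> S}" using j by auto
      qed
    qed
    ultimately show ?thesis using card_image by fastforce
  qed
  have hitsT: "hits a b w {i\<in>?L. \<tau> i \<in> S}" if "hits a b wm S" for S
    unfolding hits_def
  proof (intro allI impI)
    fix i assume i: "a \<le> i" "Suc i < b" "\<not> w i" "w (Suc i)"
    then have iL: "i \<in> Lp a b w" by (auto simp: Lp_def)
    then have "\<tau> i \<in> Lp a b wm" "\<tau> (Suc i) = Suc (\<tau> i)" using t2 by auto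
    then have "\<tau> i \<in> S \<or> \<tau> (Suc i) \<in> S" using that unfolding hits_def Lp_def by auto
    then show "i \<in> {i\<in>?L. \<tau> i \<in> S} \<or> Suc i \<in> {i\<in>?L. \<tau> i \<in> S}" using i by auto
  qed
  have pw: "F wm x \<le> F w (\<psi> x)" for x :: "nat \<times> (nat \<Rightarrow> nat)"
    unfolding F_def supp cardS[OF suppC_sub] using hitsT by auto
  have "Nsum a b m H0 c0 wm = (\<Sum>x\<in>Dm a b m H0. F wm x)" by (simp add: Nsum_def F_def)
  also have "\<dots> \<le> (\<Sum>x\<in>Dm a b m H0. F w (\<psi> x))" by (rule sum_mono) (rule pw)
  also have "\<dots> = (\<Sum>y\<in>\<psi> ` Dm a b m H0. F w y)" by (rule sum.reindex[OF inj, symmetric, unfolded comp_def])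
  also have "\<dots> \<le> (\<Sum>y\<in>Dm a b m H0. F w y)" by (rule sum_mono2[OF finite_Dm psiD]) auto
  also have "\<dots> = Nsum a b m H0 c0 w" by (simp add: Nsum_def F_def)
  finally show ?thesis .
qed



lemma Gs_abs_ge:
  assumes "g \<in> Gs a b w V" "a \<le> i" "i \<le> b"
  shows "\<bar>g a\<bar> \<le> \<bar>g i\<bar>"
  using assms(2,3)
proof (induction i rule: dec_induct)
  case base then show ?case by simp
next
  case (step i)
  then show ?case using Gs_mono_abs[OF assms(1), of i] by auto
qed

lemma omega_star_Sg:
  assumes "p permutes {1..n}" "1 \<le> n"
  shows "Omega_star n m p = card (Sg 1 n (wd p) m {1..m})"
proof -
  have "Omega_star n m p = card (Gs 1 n (wd p) ({- int m..int m} - {0}))"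
    unfolding Omega_star_def by (rule omega_Gs[OF assms(1)])
  also have "Gs 1 n (wd p) ({- int m..int m} - {0}) = Sg 1 n (wd p) m {1..m}"
  proof
    show "Gs 1 n (wd p) ({- int m..int m} - {0}) \<subseteq> Sg 1 n (wd p) m {1..m}"
    proof
      fix g assume g: "g \<in> Gs 1 n (wd p) ({- int m..int m} - {0})"
      then have "g 1 \<in> {- int m..int m} - {0}" using assms(2) by (auto simp: Gs_def PiE_def Pi_def)
      then have "nat \<bar>g 1\<bar> \<in> {1..m}" by auto
      then show "g \<in> Sg 1 n (wd p) m {1..m}" using g by (auto simp: Sg_def Gs_def PiE_def Pi_def)
    qed
    show "Sg 1 n (wd p) m {1..m} \<subseteq> Gs 1 n (wd p) ({- int m..int m} - {0})"
    proof
      fix g assume g: "g \<in> Sg 1 n (wd p) m {1..m}"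
      then have gG: "g \<in> Gs 1 n (wd p) {- int m..int m}" and g1: "1 \<le> \<bar>g 1\<bar>" by (auto simp: Sg_def)
      have "g i \<noteq> 0" if "i \<in> {1..n}" for i using Gs_abs_ge[OF gG, of i] that g1 by auto
      then show "g \<in> Gs 1 n (wd p) ({- int m..int m} - {0})" using gG by (auto simp: Gs_def PiE_def Pi_def)
    qed
  qed
  finally show ?thesis .
qed

definition wd0 :: "(nat \<Rightarrow> nat) \<Rightarrow> nat \<Rightarrow> bool" where
  "wd0 p i = (if i = 0 then False else wd p i)"

lemma omega_Sg:
  assumes "p permutes {1..n}"
  shows "Omega n m p = card (Sg 0 n (wd0 p) m {0})"
proof -
  have "Omega n m p = card (Gs 1 n (wd p) {- int m..int m})"
    unfolding Omega_def by (rule omega_Gs[OF assms(1)])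
  also have "\<dots> = card (Sg 0 n (wd0 p) m {0})"
  proof (rule bij_betw_same_card, rule bij_betw_byWitness[where f'="\<lambda>g. g(0 := undefined)"])
    show "\<forall>g\<in>Gs 1 n (wd p) {- int m..int m}. (g(0 := 0))(0 := undefined) = g"
      by (auto simp: Gs_def PiE_def extensional_def fun_eq_iff)
    show "\<forall>g\<in>Sg 0 n (wd0 p) m {0}. (g(0 := undefined))(0 := 0) = g"
      by (auto simp: Sg_def fun_eq_iff)
    show "(\<lambda>g. g(0 := 0)) ` Gs 1 n (wd p) {- int m..int m} \<subseteq> Sg 0 n (wd0 p) m {0}"
    proof
      fix h assume "h \<in> (\<lambda>g. g(0 := 0)) ` Gs 1 n (wd p) {- int m..int m}"
      then obtain g where g: "g \<in> Gs 1 n (wd p) {- int m..int m}" and h: "h = g(0 := 0)" by auto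
      have c: "cnd (wd0 p i) (h i) (h (Suc i))" if "i \<in> {0..<n}" for i
      proof (cases "i = 0")
        case True then show ?thesis unfolding cnd_iff h wd0_def by auto
      next
        case False then show ?thesis using g that unfolding Gs_def h wd0_def by auto
      qed
      show "h \<in> Sg 0 n (wd0 p) m {0}" using g c unfolding Sg_def Gs_def h
        by (auto simp: PiE_def Pi_def extensional_def)
    qed
    show "(\<lambda>g. g(0 := undefined)) ` Sg 0 n (wd0 p) m {0} \<subseteq> Gs 1 n (wd p) {- int m..int m}"
    proof
      fix h assume "h \<in> (\<lambda>g. g(0 := undefined)) ` Sg 0 n (wd0 p) m {0}"
      then obtain g where g: "g \<in> Sg 0 n (wd0 p) m {0}" and h: "h = g(0 := undefined)" by auto
      have c: "cnd (wd p i) (h i) (h (Suc i))" if i: "i \<in> {1..<n}" for i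
      proof -
        have "cnd (wd0 p i) (g i) (g (Suc i))" using g i by (auto simp: Sg_def Gs_def)
        moreover have "wd0 p i = wd p i" using i by (simp add: wd0_def)
        ultimately show ?thesis using i by (simp add: h)
      qed
      show "h \<in> Gs 1 n (wd p) {- int m..int m}" using g c unfolding Sg_def Gs_def h
        by (auto simp: PiE_def Pi_def extensional_def)
    qed
  qed
  finally show ?thesis .
qed

lemma perm_ne:
  assumes "p permutes S" shows "p i \<noteq> p (Suc i)"
  using permutes_inj[OF assms] by (metis injD n_not_Suc_n)

lemma pk_Lp:
  assumes "p permutes {1..n}"
  shows "pk n p = card (Lp 1 n (wd p))"
proof -
  have "{i \<in> {2..n-1}. p (i-1) < p i \<and> p i > p (Suc i)} = Suc ` Lp 1 n (wd p)"
  proof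
    show "{i \<in> {2..n-1}. p (i-1) < p i \<and> p i > p (Suc i)} \<subseteq> Suc ` Lp 1 n (wd p)"
    proof
      fix i assume i: "i \<in> {i \<in> {2..n-1}. p (i-1) < p i \<and> p i > p (Suc i)}"
      then have "i - 1 \<in> Lp 1 n (wd p)" "i = Suc (i - 1)" by (auto simp: Lp_def wd_def)
      then show "i \<in> Suc ` Lp 1 n (wd p)" by (metis imageI)
    qed
    show "Suc ` Lp 1 n (wd p) \<subseteq> {i \<in> {2..n-1}. p (i-1) < p i \<and> p i > p (Suc i)}"
    proof
      fix i assume "i \<in> Suc ` Lp 1 n (wd p)"
      then obtain j where j: "i = Suc j" "j \<in> Lp 1 n (wd p)" by auto
      then have j2: "1 \<le> j" "Suc j < n" "\<not> wd p j" "wd p (Suc j)" by (auto simp: Lp_def)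
      then have "p j < p (Suc j)" using perm_ne[OF assms, of j] by (auto simp: wd_def)
      then show "i \<in> {i \<in> {2..n-1}. p (i-1) < p i \<and> p i > p (Suc i)}"
        using j j2 by (auto simp: wd_def)
    qed
  qed
  then show ?thesis unfolding pk_def by (simp add: card_image)
qed

lemma lpk_Lp:
  assumes "p permutes {1..n}"
  shows "lpk n p = card (Lp 0 n (wd0 p))"
proof -
  have p1: "1 \<le> p 1" if "1 \<le> n" using permutes_in_image[OF assms, of 1] that by auto
  have "{i \<in> {1..n-1}. (if i = 1 then 0 else p (i-1)) < p i \<and> p i > p (Suc i)} = Suc ` Lp 0 n (wd0 p)"
  proof
    show "{i \<in> {1..n-1}. (if i = 1 then 0 else p (i-1)) < p i \<and> p i > p (Suc i)} \<subseteq> Suc ` Lp 0 n (wd0 p)"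
    proof
      fix i assume i: "i \<in> {i \<in> {1..n-1}. (if i = 1 then 0 else p (i-1)) < p i \<and> p i > p (Suc i)}"
      then have "i - 1 \<in> Lp 0 n (wd0 p)" "i = Suc (i - 1)"
        by (auto simp: Lp_def wd_def wd0_def split: if_splits)
      then show "i \<in> Suc ` Lp 0 n (wd0 p)" by (metis imageI)
    qed
    show "Suc ` Lp 0 n (wd0 p) \<subseteq> {i \<in> {1..n-1}. (if i = 1 then 0 else p (i-1)) < p i \<and> p i > p (Suc i)}"
    proof
      fix i assume "i \<in> Suc ` Lp 0 n (wd0 p)"
      then obtain j where j: "i = Suc j" "j \<in> Lp 0 n (wd0 p)" by auto
      then have j2: "Suc j < n" "\<not> wd0 p j" "wd0 p (Suc j)" by (auto simp: Lp_def)
      have a: "(if i = 1 then 0 else p (i-1)) < p i"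
      proof (cases "j = 0")
        case True then show ?thesis using j p1 j2 by auto
      next
        case False then show ?thesis using j j2 perm_ne[OF assms, of j] by (auto simp: wd0_def wd_def)
      qed
      show "i \<in> {i \<in> {1..n-1}. (if i = 1 then 0 else p (i-1)) < p i \<and> p i > p (Suc i)}"
        using a j j2 by (auto simp: wd0_def wd_def)
    qed
  qed
  then show ?thesis unfolding lpk_def by (simp add: card_image)
qed

lemma Lp_bound: "card (Lp a b w) \<le> (b - a) div 2"
proof -
  have d: "Lp a b w \<inter> Suc ` Lp a b w = {}" by (auto simp: Lp_def)
  have s: "Lp a b w \<union> Suc ` Lp a b w \<subseteq> {a..<b}" by (auto simp: Lp_def)
  have "card (Lp a b w \<union> Suc ` Lp a b w) = card (Lp a b w) + card (Lp a b w)"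
    using d finite_Lp by (simp add: card_Un_disjoint card_image)
  moreover have "card (Lp a b w \<union> Suc ` Lp a b w) \<le> b - a"
    using card_mono[OF _ s] by simp
  ultimately show ?thesis by linarith
qed

lemma Lp_empty_hits: "Lp a b w = {} \<Longrightarrow> hits a b w C"
  unfolding hits_def Lp_def by auto



lemma invol_permutes:
  assumes "\<And>x. x \<notin> S \<Longrightarrow> f x = x" "\<And>x. f (f x) = x"
  shows "f permutes S"
  unfolding permutes_def using assms by metis

definition rv :: "nat \<Rightarrow> nat \<Rightarrow> nat" where
  "rv n i = (if 1 \<le> i \<and> i \<le> n then Suc n - i else i)"

definition sw :: "nat \<Rightarrow> nat \<Rightarrow> nat \<Rightarrow> nat" where
  "sw s n i = (if s \<le> i \<and> i \<le> n then (if even (i - s) then (if Suc i \<le> n then Suc i else i) else i - 1) else i)"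

lemma rv_perm: "rv n permutes {1..n}"
  by (rule invol_permutes) (auto simp: rv_def)

lemma sw_invol:
  assumes "1 \<le> s" shows "sw s n (sw s n x) = x"
proof (cases "s \<le> x \<and> x \<le> n")
  case True
  show ?thesis
  proof (cases "even (x - s)")
    case ev: True
    show ?thesis
    proof (cases "Suc x \<le> n")
      case True
      have "\<not> even (Suc x - s)" using ev \<open>s \<le> x \<and> x \<le> n\<close> by (simp add: Suc_diff_le)
      then show ?thesis using True ev \<open>s \<le> x \<and> x \<le> n\<close> by (simp add: sw_def)
    next
      case False then show ?thesis using ev \<open>s \<le> x \<and> x \<le> n\<close> by (simp add: sw_def)
    qed
  next
    case od: False
    then have xs: "s < x" using True by (cases "x = s") auto
    have "even (x - 1 - s)" using od xs
      by (metis Suc_diff_Suc diff_Suc_1 diff_commute even_Suc le_add_diff_inverse2 less_imp_le_nat Nat.add_diff_assoc2)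
    moreover have "s \<le> x - 1" "x - 1 \<le> n" "Suc (x - 1) = x" using xs True by auto
    ultimately show ?thesis using od xs True by (simp add: sw_def)
  qed
next
  case False
  then have "sw s n x = x" unfolding sw_def by (rule if_not_P)
  then show ?thesis by simp
qed

lemma sw_perm: "1 \<le> s \<Longrightarrow> sw s n permutes {1..n}"
  by (rule invol_permutes[OF _ sw_invol]) (auto simp: sw_def)

lemma wd_sw:
  assumes "s = 1 \<or> s = 2" "1 \<le> i" "i < n"
  shows "wd (sw s n) i \<longleftrightarrow> (s \<le> i \<and> even (i - s))"
proof (cases "s \<le> i")
  case False
  then have "i = 1" "s = 2" using assms by auto
  then show ?thesis using assms by (auto simp: wd_def sw_def)
next
  case si: True
  show ?thesis
  proof (cases "even (i - s)")
    case True
    have "\<not> even (Suc i - s)" using True si by (simp add: Suc_diff_le)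
    then show ?thesis using True si assms by (simp add: wd_def sw_def)
  next
    case False
    have "even (Suc i - s)" using False si by (simp add: Suc_diff_le)
    then show ?thesis using False si assms by (auto simp: wd_def sw_def)
  qed
qed

lemma card_even: "card {j. j < N \<and> even j} = (N + 1) div 2"
proof (induction N)
  case 0 then show ?case by simp
next
  case (Suc N)
  have e: "{j. j < Suc N \<and> even j} = (if even N then insert N {j. j < N \<and> even j} else {j. j < N \<and> even j})"
    by (auto simp: less_Suc_eq)
  show ?case unfolding e using Suc by auto
qed

lemma card_odd: "card {j. j < N \<and> odd j} = N div 2"
proof (induction N)
  case 0 then show ?case by simp
next
  case (Suc N)
  have e: "{j. j < Suc N \<and> odd j} = (if odd N then insert N {j. j < N \<and> odd j} else {j. j < N \<and> odd j})"
    by (auto simp: less_Suc_eq)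
  show ?case unfolding e using Suc by auto
qed

lemma lpk_sw: assumes "1 \<le> n" shows "lpk n (sw 1 n) = n div 2"
proof -
  have "Lp 0 n (wd0 (sw 1 n)) = {j. j < n - 1 \<and> even j}"
  proof (rule set_eqI)
    fix j
    show "j \<in> Lp 0 n (wd0 (sw 1 n)) \<longleftrightarrow> j \<in> {j. j < n - 1 \<and> even j}"
    proof (cases "Suc j < n")
      case False then show ?thesis by (auto simp: Lp_def)
    next
      case sj: True
      have w2: "wd (sw 1 n) (Suc j) \<longleftrightarrow> even j" using wd_sw[of 1 "Suc j" n] sj by simp
      have w1: "wd0 (sw 1 n) j \<longleftrightarrow> odd j"
      proof (cases j)
        case 0 then show ?thesis by (simp add: wd0_def)
      next
        case (Suc k) then show ?thesis using wd_sw[of 1 j n] sj by (simp add: wd0_def)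
      qed
      show ?thesis using sj w1 w2 by (auto simp: Lp_def wd0_def)
    qed
  qed
  then show ?thesis using lpk_Lp[OF sw_perm[of 1 n]] card_even[of "n - 1"] assms by simp
qed

lemma pk_sw: assumes "1 \<le> n" shows "pk n (sw 2 n) = (n - 1) div 2"
proof -
  have "Lp 1 n (wd (sw 2 n)) = {j. j < n - 1 \<and> odd j}"
  proof (rule set_eqI)
    fix j
    show "j \<in> Lp 1 n (wd (sw 2 n)) \<longleftrightarrow> j \<in> {j. j < n - 1 \<and> odd j}"
    proof (cases "Suc j < n \<and> 1 \<le> j")
      case False then show ?thesis by (cases j) (auto simp: Lp_def)
    next
      case sj: True
      have w2: "wd (sw 2 n) (Suc j) \<longleftrightarrow> odd j"
        using wd_sw[of 2 "Suc j" n] sj by (cases j) auto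
      have w1: "wd (sw 2 n) j \<longleftrightarrow> (2 \<le> j \<and> even j)"
        using wd_sw[of 2 j n] sj by (cases "2 \<le> j") (auto simp: even_diff_nat)
      show ?thesis using sj w1 w2 by (auto simp: Lp_def)
    qed
  qed
  then show ?thesis using pk_Lp[OF sw_perm[of 2 n]] card_odd[of "n - 1"] by simp
qed

lemma des_rv: "des n (rv n) = n - 1"
proof -
  have "{i \<in> {1..<n}. rv n i > rv n (Suc i)} = {1..<n}" by (auto simp: rv_def)
  then show ?thesis unfolding des_def by simp
qed

lemma stats_id: "pk n id = 0" "lpk n id = 0" "des n id = 0"
  unfolding pk_def lpk_def des_def by auto



lemma Gs_strict_mono:
  assumes "V \<subseteq> {0<..}" "\<forall>i\<in>{a..<b}. w' i \<longrightarrow> w i"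
  shows "Gs a b w V \<subseteq> Gs a b w' V"
proof
  fix g assume g: "g \<in> Gs a b w V"
  have "cnd (w' i) (g i) (g (Suc i))" if i: "i \<in> {a..<b}" for i
  proof -
    have c: "cnd (w i) (g i) (g (Suc i))" using g i by (auto simp: Gs_def)
    have "g i \<in> V" "g (Suc i) \<in> V" using g i by (auto simp: Gs_def PiE_def Pi_def)
    then have pos: "0 < g i" "0 < g (Suc i)" using assms(1) by auto
    show ?thesis
    proof (cases "w' i")
      case True then show ?thesis using c assms(2) i by auto
    next
      case False then show ?thesis using cnd_pos(2)[OF pos c] by simp
    qed
  qed
  then show "g \<in> Gs a b w' V" using g by (auto simp: Gs_def)
qed

lemma abs_between:
  fixes x a b :: real
  assumes "b \<le> x" "x \<le> a"
  shows "\<bar>1 - x\<bar> \<le> max \<bar>1 - a\<bar> \<bar>1 - b\<bar>"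
  using assms by (auto simp: max_def abs_if)

lemma final_generic:
  fixes P :: "(nat \<Rightarrow> nat) \<Rightarrow> real" and st :: "nat \<Rightarrow> (nat \<Rightarrow> nat) \<Rightarrow> nat"
  assumes e0: "\<exists>p. p permutes {1..n} \<and> st n p = 0"
    and ek: "\<exists>p. p permutes {1..n} \<and> st n p = k"
    and up: "\<And>p q. p permutes {1..n} \<Longrightarrow> q permutes {1..n} \<Longrightarrow> st n q = 0 \<Longrightarrow> P p \<le> P q"
    and lo: "\<And>p q. p permutes {1..n} \<Longrightarrow> q permutes {1..n} \<Longrightarrow> st n q = k \<Longrightarrow> P q \<le> P p"
  shows "sep_linf_extremal n P st k"
proof -
  define A where "A = (SOME p. p permutes {1..n} \<and> st n p = 0)"
  define B where "B = (SOME p. p permutes {1..n} \<and> st n p = k)"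
  have A: "A permutes {1..n}" "st n A = 0" using someI_ex[OF e0] unfolding A_def by auto
  have B: "B permutes {1..n}" "st n B = k" using someI_ex[OF ek] unfolding B_def by auto
  have PA: "Pk n P st 0 = P A" by (simp add: Pk_def A_def)
  have PB: "Pk n P st k = P B" by (simp add: Pk_def B_def)
  let ?S = "{p. p permutes {1..n}}"
  have fin: "finite ?S" using finite_permutations[of "{1..n}"] by simp
  have AS: "A \<in> ?S" and BS: "B \<in> ?S" using A B by auto
  have bnd: "P B \<le> P p \<and> P p \<le> P A" if "p \<in> ?S" for p using up[OF _ A] lo[OF _ B] that by auto
  have fn: "0 \<le> (fact n :: real)" by simp
  have s1: "sep n P = 1 - fact n * P B"
    unfolding sep_def
  proof (rule antisym)
    show "Max ((\<lambda>p. 1 - fact n * P p) ` ?S) \<le> 1 - fact n * P B"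
    proof (rule Max.boundedI)
      show "finite ((\<lambda>p. 1 - fact n * P p) ` ?S)" using fin by simp
      show "(\<lambda>p. 1 - fact n * P p) ` ?S \<noteq> {}" using AS by auto
      fix y assume "y \<in> (\<lambda>p. 1 - fact n * P p) ` ?S"
      then obtain p where "p \<in> ?S" "y = 1 - fact n * P p" by auto
      then show "y \<le> 1 - fact n * P B" using bnd[of p] fn by (simp add: mult_left_mono)
    qed
    show "1 - fact n * P B \<le> Max ((\<lambda>p. 1 - fact n * P p) ` ?S)"
      using fin BS by (intro Max_ge) auto
  qed
  have s2: "linf_dist n P = max \<bar>1 - fact n * P A\<bar> \<bar>1 - fact n * P B\<bar>"
    unfolding linf_dist_def
  proof (rule antisym)
    show "Max ((\<lambda>p. \<bar>1 - fact n * P p\<bar>) ` ?S) \<le> max \<bar>1 - fact n * P A\<bar> \<bar>1 - fact n * P B\<bar>"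
    proof (rule Max.boundedI)
      show "finite ((\<lambda>p. \<bar>1 - fact n * P p\<bar>) ` ?S)" using fin by simp
      show "(\<lambda>p. \<bar>1 - fact n * P p\<bar>) ` ?S \<noteq> {}" using AS by auto
      fix y assume "y \<in> (\<lambda>p. \<bar>1 - fact n * P p\<bar>) ` ?S"
      then obtain p where p: "p \<in> ?S" "y = \<bar>1 - fact n * P p\<bar>" by auto
      have "fact n * P B \<le> fact n * P p" "fact n * P p \<le> fact n * P A"
        using bnd[OF p(1)] fn by (auto simp: mult_left_mono)
      then show "y \<le> max \<bar>1 - fact n * P A\<bar> \<bar>1 - fact n * P B\<bar>" using p abs_between by simp
    qed
    have "\<bar>1 - fact n * P A\<bar> \<le> Max ((\<lambda>p. \<bar>1 - fact n * P p\<bar>) ` ?S)"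
      using fin AS by (intro Max_ge) auto
    moreover have "\<bar>1 - fact n * P B\<bar> \<le> Max ((\<lambda>p. \<bar>1 - fact n * P p\<bar>) ` ?S)"
      using fin BS by (intro Max_ge) auto
    ultimately show "max \<bar>1 - fact n * P A\<bar> \<bar>1 - fact n * P B\<bar> \<le> Max ((\<lambda>p. \<bar>1 - fact n * P p\<bar>) ` ?S)"
      by simp
  qed
  have "P B \<le> P A" using bnd[OF AS] by simp
  then have "fact n * P B \<le> fact n * P A" using fn by (simp add: mult_left_mono)
  then have "max (1 - fact n * P A) (1 - fact n * P B) = 1 - fact n * P B" by simp
  then show ?thesis unfolding sep_linf_extremal_def PA PB s1 s2 by simp
qed

lemma Lp_card0: "card (Lp a b w) = 0 \<Longrightarrow> Lp a b w = {}"
  using finite_Lp by auto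

theorem mainTheorem7:
  fixes n m :: nat
  assumes "n \<ge> 1" and "m \<ge> 1"
  shows "sep_linf_extremal n (x_lazy n m) lpk (n div 2) \<and>
         sep_linf_extremal n (x_std n m) pk ((n - 1) div 2) \<and>
         sep_linf_extremal n (x_strict n m) des (n - 1)"
proof (intro conjI)
  have idp: "id permutes {1..n}" by (rule permutes_id)
  show "sep_linf_extremal n (x_lazy n m) lpk (n div 2)"
  proof (rule final_generic)
    show "\<exists>p. p permutes {1..n} \<and> lpk n p = 0" using idp stats_id by blast
    show "\<exists>p. p permutes {1..n} \<and> lpk n p = n div 2" using sw_perm[of 1 n] lpk_sw[OF assms(1)] by auto
    have O: "Omega n m p = Nsum 0 n m {0} 0 (wd0 p)" if "p permutes {1..n}" for p
      using omega_Sg[OF that] card_Sg_lazy[of "wd0 p"] by (simp add: wd0_def)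
    have pos: "0 < (2 * real m + 1) ^ n" by simp
    fix p q assume p: "p permutes {1..n}" and q: "q permutes {1..n}"
    {
      assume "lpk n q = 0"
      then have "Lp 0 n (wd0 q) = {}" using lpk_Lp[OF q] Lp_card0 by simp
      then have "Omega n m p \<le> Omega n m q" unfolding O[OF p] O[OF q]
        by (intro Nsum_upper allI Lp_empty_hits)
      then show "x_lazy n m p \<le> x_lazy n m q" unfolding x_lazy_def using pos
        by (simp add: divide_right_mono)
    }
    {
      assume "lpk n q = n div 2"
      then have "card (Lp 0 n (wd0 p)) \<le> card (Lp 0 n (wd0 q))"
        using lpk_Lp[OF q] Lp_bound[of 0 n "wd0 p"] by simp
      then have "Omega n m q \<le> Omega n m p" unfolding O[OF p] O[OF q]
        by (rule Nsum_lower)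
      then show "x_lazy n m q \<le> x_lazy n m p" unfolding x_lazy_def using pos
        by (simp add: divide_right_mono)
    }
  qed
  show "sep_linf_extremal n (x_std n m) pk ((n - 1) div 2)"
  proof (rule final_generic)
    show "\<exists>p. p permutes {1..n} \<and> pk n p = 0" using idp stats_id by blast
    show "\<exists>p. p permutes {1..n} \<and> pk n p = (n - 1) div 2" using sw_perm[of 2 n] pk_sw[OF assms(1)] by auto
    have O: "Omega_star n m p = Nsum 1 n m {1..m} 1 (wd p)" if "p permutes {1..n}" for p
      using omega_star_Sg[OF that assms(1)] card_Sg_std[OF assms(1)] by simp
    have pos: "0 < (2 * real m) ^ n" using assms(2) by simp
    fix p q assume p: "p permutes {1..n}" and q: "q permutes {1..n}"
    {
      assume "pk n q = 0"
      then have "Lp 1 n (wd q) = {}" using pk_Lp[OF q] Lp_card0 by simp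
      then have "Omega_star n m p \<le> Omega_star n m q" unfolding O[OF p] O[OF q]
        by (intro Nsum_upper allI Lp_empty_hits)
      then show "x_std n m p \<le> x_std n m q" unfolding x_std_def using pos
        by (simp add: divide_right_mono)
    }
    {
      assume "pk n q = (n - 1) div 2"
      then have "card (Lp 1 n (wd p)) \<le> card (Lp 1 n (wd q))"
        using pk_Lp[OF q] Lp_bound[of 1 n "wd p"] by simp
      then have "Omega_star n m q \<le> Omega_star n m p" unfolding O[OF p] O[OF q]
        by (rule Nsum_lower)
      then show "x_std n m q \<le> x_std n m p" unfolding x_std_def using pos
        by (simp add: divide_right_mono)
    }
  qed
  show "sep_linf_extremal n (x_strict n m) des (n - 1)"
  proof (rule final_generic)
    show "\<exists>p. p permutes {1..n} \<and> des n p = 0" using idp stats_id by blast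
    show "\<exists>p. p permutes {1..n} \<and> des n p = n - 1" using rv_perm des_rv by blast
    have O: "Omega_plus n m p = card (Gs 1 n (wd p) {1..int m})" if "p permutes {1..n}" for p
      unfolding Omega_plus_def by (rule omega_Gs[OF that])
    have pos: "0 < (real m) ^ n" using assms(2) by simp
    have Vp: "{1..int m} \<subseteq> {0<..}" by auto
    have fG: "finite (Gs 1 n w {1..int m})" for w by (rule finite_Gs) simp
    fix p q assume p: "p permutes {1..n}" and q: "q permutes {1..n}"
    {
      assume "des n q = 0"
      then have "{i \<in> {1..<n}. wd q i} = {}" unfolding des_def wd_def by simp
      then have "\<forall>i\<in>{1..<n}. wd q i \<longrightarrow> wd p i" by auto
      then have "Gs 1 n (wd p) {1..int m} \<subseteq> Gs 1 n (wd q) {1..int m}" by (rule Gs_strict_mono[OF Vp])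
      then have "Omega_plus n m p \<le> Omega_plus n m q" unfolding O[OF p] O[OF q]
        by (rule card_mono[OF fG])
      then show "x_strict n m p \<le> x_strict n m q" unfolding x_strict_def using pos
        by (simp add: divide_right_mono)
    }
    {
      assume "des n q = n - 1"
      then have "card {i \<in> {1..<n}. wd q i} = card {1..<n}" unfolding des_def wd_def by simp
      then have "{i \<in> {1..<n}. wd q i} = {1..<n}" by (intro card_subset_eq) auto
      then have "\<forall>i\<in>{1..<n}. wd p i \<longrightarrow> wd q i" by auto
      then have "Gs 1 n (wd q) {1..int m} \<subseteq> Gs 1 n (wd p) {1..int m}" by (rule Gs_strict_mono[OF Vp])
      then have "Omega_plus n m q \<le> Omega_plus n m p" unfolding O[OF p] O[OF q]
        by (rule card_mono[OF fG])
      then show "x_strict n m q \<le> x_strict n m p" unfolding x_strict_def using pos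
        by (simp add: divide_right_mono)
    }
  qed
qed


end
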